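(* Let $k$ be a positive integer and let $G$ be a $3$-graph with $\lambda(G)>\lambda(K_{k+1}^3)$, and let $\vec x$ be an optimal weight vector of $G$. Then every vertex $v\in V(G)$ whose link graph satisfies $\omega(G_v)\leq k$ has weight $x_v<\frac{1}{k+1}$.
   Context: For a $3$-graph $G$ on vertex set $[n]$ and $\vec x\in\Delta=\{\vec x\in[0,1]^n:\sum_i x_i=1\}$, put $\lambda(G,\vec x)=\sum_{e\in E(G)}\prod_{i\in e}x_i$ and $\lambda(G)=\max_{\vec x\in\Delta}\lambda(G,\vec x)$ (the Lagrangian). A vector $\vec x\in\Delta$ with $\lambda(G,\vec x)=\lambda(G)$ is an optimal weight vector, and $x_v$ is the weight of vertex $v$. The link graph of $v$ is the $2$-graph $G_v=\{ab: vab\in E(G)\}$, and $\omega(\cdot)$ denotes the order of a maximum clique of a $2$-graph. $K_m^3$ is the complete $3$-graph on $m$ vertices. *)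

theory Defs
  imports Complex_Main
begin

definition is_3graph :: "nat \<Rightarrow> nat set set \<Rightarrow> bool" where
  "is_3graph n E \<longleftrightarrow> (\<forall>e\<in>E. e \<subseteq> {1..n} \<and> card e = 3)"

definition simplex :: "nat \<Rightarrow> (nat \<Rightarrow> real) set" where
  "simplex n = {x. (\<forall>i\<in>{1..n}. 0 \<le> x i \<and> x i \<le> 1) \<and> (\<Sum>i\<in>{1..n}. x i) = 1}"

definition lam :: "nat set set \<Rightarrow> (nat \<Rightarrow> real) \<Rightarrow> real" where
  "lam E x = (\<Sum>e\<in>E. \<Prod>i\<in>e. x i)"

definition lagrangian :: "nat \<Rightarrow> nat set set \<Rightarrow> real" where
  "lagrangian n E = Sup (lam E ` simplex n)"

definition optimal_weight :: "nat \<Rightarrow> nat set set \<Rightarrow> (nat \<Rightarrow> real) \<Rightarrow> bool" where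
  "optimal_weight n E x \<longleftrightarrow> x \<in> simplex n \<and> lam E x = lagrangian n E"

definition complete3 :: "nat \<Rightarrow> nat set set" where
  "complete3 m = {e. e \<subseteq> {1..m} \<and> card e = 3}"

definition link :: "nat set set \<Rightarrow> nat \<Rightarrow> nat set set" where
  "link E v = {{a, b} | a b. {v, a, b} \<in> E}"

definition is_clique :: "nat set set \<Rightarrow> nat set \<Rightarrow> bool" where
  "is_clique L S \<longleftrightarrow> (\<forall>a\<in>S. \<forall>b\<in>S. a \<noteq> b \<longrightarrow> {a, b} \<in> L)"

definition clique_number :: "nat \<Rightarrow> nat set set \<Rightarrow> nat" where
  "clique_number n L = Max {card S | S. S \<subseteq> {1..n} \<and> is_clique L S}"

end

theory Submission
  imports Defs "HOL-Analysis.Convex"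
begin

lemma pair_sum:
  fixes L :: "nat set set" and y :: "nat \<Rightarrow> real"
  assumes V: "finite V" and L: "\<forall>e\<in>L. e \<subseteq> V \<and> card e = 2"
  shows "2 * lam L y = (\<Sum>a\<in>V. \<Sum>b\<in>V. if {a,b} \<in> L then y a * y b else 0)"
proof -
  define P where "P = {p\<in>V\<times>V. {fst p, snd p} \<in> L}"
  have fP: "finite P" using V unfolding P_def by auto
  have fL: "finite L" using L V by (meson Pow_iff finite_Pow_iff finite_subset subsetI)
  have "(\<Sum>a\<in>V. \<Sum>b\<in>V. if {a,b} \<in> L then y a * y b else 0)
      = (\<Sum>p\<in>V\<times>V. if {fst p, snd p} \<in> L then y (fst p) * y (snd p) else 0)"
    by (simp add: sum.cartesian_product case_prod_beta)
  also have "\<dots> = (\<Sum>p\<in>P. y (fst p) * y (snd p))"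
    unfolding P_def using V by (simp add: sum.inter_filter[symmetric])
  also have "\<dots> = (\<Sum>e\<in>L. \<Sum>p\<in>{p\<in>P. {fst p, snd p} = e}. y (fst p) * y (snd p))"
    by (rule sum.group[symmetric, OF fP fL]) (auto simp: P_def)
  also have "\<dots> = (\<Sum>e\<in>L. 2 * (\<Prod>i\<in>e. y i))"
  proof (rule sum.cong[OF refl])
    fix e assume e: "e \<in> L"
    have "card e = 2" using L e by auto
    then obtain a b where ab: "e = {a,b}" "a \<noteq> b" unfolding card_2_iff by blast
    have ab2: "a \<in> V" "b \<in> V" using L e ab by auto
    have "{p\<in>P. {fst p, snd p} = e} = {(a,b),(b,a)}"
    proof (intro equalityI subsetI)
      fix p assume "p \<in> {p\<in>P. {fst p, snd p} = e}"
      then have "{fst p, snd p} = {a,b}" using ab by simp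
      then have "(fst p = a \<and> snd p = b) \<or> (fst p = b \<and> snd p = a)" by (simp add: doubleton_eq_iff)
      then show "p \<in> {(a,b),(b,a)}" by (cases p) auto
    next
      fix p assume "p \<in> {(a,b),(b,a)}"
      then show "p \<in> {p\<in>P. {fst p, snd p} = e}" using ab ab2 e unfolding P_def by (auto simp: insert_commute)
    qed
    then show "(\<Sum>p\<in>{p\<in>P. {fst p, snd p} = e}. y (fst p) * y (snd p)) = 2 * (\<Prod>i\<in>e. y i)"
      using ab by simp
  qed
  finally show ?thesis by (simp add: lam_def sum_distrib_left)
qed

lemma shift_edge:
  fixes y :: "nat \<Rightarrow> real"
  assumes "finite e" "\<not> (i \<in> e \<and> j \<in> e)"
  shows "(\<Prod>l\<in>e. y l + (if l = i then t else 0) - (if l = j then t else 0))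
     = (\<Prod>l\<in>e. y l) + t * (if i \<in> e then (\<Prod>l\<in>e-{i}. y l) else 0)
                     - t * (if j \<in> e then (\<Prod>l\<in>e-{j}. y l) else 0)"
proof -
  define z where "z = (\<lambda>l. y l + (if l = i then t else 0) - (if l = j then t else 0))"
  have zz: "(\<Prod>l\<in>e. y l + (if l = i then t else 0) - (if l = j then t else 0)) = prod z e"
    unfolding z_def ..
  show ?thesis
  proof (cases "i \<in> e")
    case True
    then have nj: "j \<notin> e" using assms by auto
    then have ij: "i \<noteq> j" using True by auto
    have zi: "z i = y i + t" unfolding z_def using ij by simp
    have 1: "prod z e = z i * prod z (e-{i})" using assms(1) True by (rule prod.remove)
    have 2: "prod z (e-{i}) = prod y (e-{i})" using nj unfolding z_def by (intro prod.cong) auto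
    have 3: "prod y e = y i * prod y (e-{i})" using assms(1) True by (rule prod.remove)
    have r: "(if i \<in> e then prod y (e-{i}) else 0) = prod y (e-{i})" using True by simp
    have r2: "(if j \<in> e then prod y (e-{j}) else 0) = 0" using nj by simp
    show ?thesis unfolding zz r r2 1 2 3 zi by (simp add: distrib_right)
  next
    case False
    note ni = False
    show ?thesis
    proof (cases "j \<in> e")
      case True
      then have ij: "i \<noteq> j" using ni by auto
      have zj: "z j = y j - t" unfolding z_def using ij by simp
      have 1: "prod z e = z j * prod z (e-{j})" using assms(1) True by (rule prod.remove)
      have 2: "prod z (e-{j}) = prod y (e-{j})" using ni unfolding z_def by (intro prod.cong) auto
      have 3: "prod y e = y j * prod y (e-{j})" using assms(1) True by (rule prod.remove)
      have r: "(if i \<in> e then prod y (e-{i}) else 0) = 0" using ni by simp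
      have r2: "(if j \<in> e then prod y (e-{j}) else 0) = prod y (e-{j})" using True by simp
      show ?thesis unfolding zz r r2 1 2 3 zj by (simp add: left_diff_distrib)
    next
      case F2: False
      have "prod z e = prod y e" using ni F2 unfolding z_def by (intro prod.cong) auto
      then show ?thesis using ni F2 zz by simp
    qed
  qed
qed

lemma shift_lam:
  fixes y :: "nat \<Rightarrow> real"
  assumes "\<forall>e\<in>L. finite e" "{i,j} \<notin> L" "\<forall>e\<in>L. card e = 2" "i \<noteq> j"
  shows "\<exists>C. \<forall>t. lam L (\<lambda>l. y l + (if l = i then t else 0) - (if l = j then t else 0)) = lam L y + t * C"
proof -
  have nb: "\<not> (i \<in> e \<and> j \<in> e)" if "e \<in> L" for e
  proof
    assume h: "i \<in> e \<and> j \<in> e"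
    have "{i,j} \<subseteq> e" using h by auto
    moreover have "card {i,j} = 2" using assms(4) by simp
    moreover have "finite e" "card e = 2" using assms that by auto
    ultimately have "{i,j} = e" by (metis card_subset_eq)
    then show False using assms(2) that by simp
  qed
  define C where "C = (\<Sum>e\<in>L. if i \<in> e then (\<Prod>l\<in>e-{i}. y l) else 0) - (\<Sum>e\<in>L. if j \<in> e then (\<Prod>l\<in>e-{j}. y l) else 0)"
  have "lam L (\<lambda>l. y l + (if l = i then t else 0) - (if l = j then t else 0)) = lam L y + t * C" for t
  proof -
    have "lam L (\<lambda>l. y l + (if l = i then t else 0) - (if l = j then t else 0))
      = (\<Sum>e\<in>L. (\<Prod>l\<in>e. y l) + t * (if i \<in> e then (\<Prod>l\<in>e-{i}. y l) else 0)
                     - t * (if j \<in> e then (\<Prod>l\<in>e-{j}. y l) else 0))"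
      unfolding lam_def by (rule sum.cong[OF refl], rule shift_edge) (use assms(1) nb in auto)
    also have "\<dots> = lam L y + t * C"
      unfolding lam_def C_def by (simp add: sum.distrib sum_subtractf sum_distrib_left right_diff_distrib)
    finally show ?thesis .
  qed
  then show ?thesis by blast
qed

lemma clique_case:
  fixes L :: "nat set set" and y :: "nat \<Rightarrow> real"
  assumes V: "finite V" and L: "\<forall>e\<in>L. e \<subseteq> V \<and> card e = 2"
    and T: "T = {i\<in>V. y i \<noteq> 0}" and cT: "card T \<le> k" and k: "k \<ge> 1"
    and nn: "\<forall>i\<in>V. y i \<ge> 0"
  shows "lam L y \<le> (1 - 1/real k)/2 * (\<Sum>i\<in>V. y i)^2"
proof -
  have fT: "finite T" using V T by auto
  have TV: "T \<subseteq> V" using T by auto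
  define S where "S = (\<Sum>i\<in>T. y i)"
  have SV: "(\<Sum>i\<in>V. y i) = S" unfolding S_def
    by (rule sum.mono_neutral_right[OF V TV]) (auto simp: T)
  have "2 * lam L y = (\<Sum>a\<in>V. \<Sum>b\<in>V. if {a,b} \<in> L then y a * y b else 0)"
    by (rule pair_sum[OF V L])
  also have "\<dots> = (\<Sum>a\<in>T. \<Sum>b\<in>V. if {a,b} \<in> L then y a * y b else 0)"
    by (rule sum.mono_neutral_right[OF V TV]) (auto simp: T intro!: sum.neutral split: if_splits)
  also have "\<dots> = (\<Sum>a\<in>T. \<Sum>b\<in>T. if {a,b} \<in> L then y a * y b else 0)"
    by (intro sum.cong refl sum.mono_neutral_right[OF V TV]) (auto simp: T)
  also have "\<dots> \<le> (\<Sum>a\<in>T. \<Sum>b\<in>T. y a * y b - (if a = b then y a * y b else 0))"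
  proof (intro sum_mono)
    fix a b assume a: "a \<in> T" and b: "b \<in> T"
    have "y a * y b \<ge> 0" using nn subsetD[OF TV a] subsetD[OF TV b] by simp
    moreover have "{a,b} \<in> L \<Longrightarrow> a \<noteq> b" using L by (cases "a = b") auto
    ultimately show "(if {a,b} \<in> L then y a * y b else 0) \<le> y a * y b - (if a = b then y a * y b else 0)"
      by auto
  qed
  also have "\<dots> = S^2 - (\<Sum>a\<in>T. (y a)^2)"
    by (simp add: sum_subtractf fT S_def power2_eq_square sum_product)
  finally have 1: "2 * lam L y \<le> S^2 - (\<Sum>a\<in>T. (y a)^2)" .
  have 2: "S^2 \<le> (\<Sum>a\<in>T. (y a)^2) * card T" unfolding S_def by (rule sum_squared_le_sum_of_squares)
  have q: "(\<Sum>a\<in>T. (y a)^2) \<ge> 0" by (simp add: sum_nonneg)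
  show ?thesis
  proof (cases "T = {}")
    case True
    then show ?thesis using 1 S_def SV by simp
  next
    case False
    then have c0: "card T \<ge> 1" using fT by (simp add: Suc_leI card_gt_0_iff)
    have "S^2 / k \<le> S^2 / card T" using c0 cT by (intro divide_left_mono) auto
    also have "\<dots> \<le> (\<Sum>a\<in>T. (y a)^2)" using 2 c0 by (simp add: divide_le_eq)
    finally have "S^2/k \<le> (\<Sum>a\<in>T. (y a)^2)" .
    then have "2 * lam L y \<le> S^2 - S^2/k" using 1 by linarith
    then show ?thesis using SV by (simp add: algebra_simps)
  qed
qed

lemma motzkin_straus:
  fixes L :: "nat set set" and k :: nat
  assumes V: "finite V" and L: "\<forall>e\<in>L. e \<subseteq> V \<and> card e = 2"
    and cl: "\<forall>S. S \<subseteq> V \<and> is_clique L S \<longrightarrow> card S \<le> k" and k: "k \<ge> 1"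
  shows "\<forall>i\<in>V. y i \<ge> 0 \<Longrightarrow> lam L y \<le> (1 - 1/real k)/2 * (\<Sum>i\<in>V. y i)^2"
proof (induction "card {i\<in>V. y i \<noteq> 0}" arbitrary: y rule: less_induct)
  case less
  define T where "T = {i\<in>V. y i \<noteq> 0}"
  have fT: "finite T" using V T_def by auto
  have TV: "T \<subseteq> V" using T_def by auto
  show ?case
  proof (cases "is_clique L T")
    case True
    then have "card T \<le> k" using cl TV by auto
    then show ?thesis using clique_case[OF V L T_def _ k less.prems] by simp
  next
    case False
    then obtain i j where ij: "i \<in> T" "j \<in> T" "i \<noteq> j" "{i,j} \<notin> L"
      unfolding is_clique_def by auto
    have fe: "\<forall>e\<in>L. finite e" using L by (metis card.infinite zero_neq_numeral)
    obtain C where C: "\<And>t. lam L (\<lambda>l. y l + (if l = i then t else 0) - (if l = j then t else 0)) = lam L y + t * C"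
      using shift_lam[OF fe ij(4) _ ij(3)] L by blast
    define t where "t = (if C \<ge> 0 then y j else - y i)"
    define z where "z = (\<lambda>l. y l + (if l = i then t else 0) - (if l = j then t else 0))"
    have ge: "lam L y \<le> lam L z" unfolding z_def C t_def using less.prems ij TV
      by (auto simp: mult_nonneg_nonneg mult_nonpos_nonneg mult_nonneg_nonpos)
    have nz: "\<forall>l\<in>V. z l \<ge> 0" unfolding z_def t_def using less.prems ij TV
      by (auto simp: add_nonneg_nonneg) (smt (verit) subsetD)+
    have sz: "(\<Sum>l\<in>V. z l) = (\<Sum>l\<in>V. y l)" unfolding z_def
      using ij TV V subsetD[OF TV ij(1)] subsetD[OF TV ij(2)] by (simp add: sum.distrib sum_subtractf)
    have sub: "{l\<in>V. z l \<noteq> 0} \<subseteq> T - {if C \<ge> 0 then j else i}"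
      unfolding z_def t_def T_def using ij[unfolded T_def] by auto
    have "card {l\<in>V. z l \<noteq> 0} \<le> card (T - {if C \<ge> 0 then j else i})"
      by (rule card_mono[OF _ sub]) (use fT in auto)
    also have "\<dots> < card T" using fT ij by (intro psubset_card_mono) auto
    finally have "card {l\<in>V. z l \<noteq> 0} < card {i\<in>V. y i \<noteq> 0}" unfolding T_def .
    from less.hyps[OF this nz] ge sz show ?thesis by simp
  qed
qed

lemma fin_E: "is_3graph n E \<Longrightarrow> finite E"
  unfolding is_3graph_def by (meson Pow_iff finite_Pow_iff finite_atLeastAtMost finite_subset subsetI)

lemma lag_upper:
  assumes G: "is_3graph n E" and y: "y \<in> simplex n"
  shows "lam E y \<le> lagrangian n E"
proof -
  have "bdd_above (lam E ` simplex n)"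
  proof (rule bdd_aboveI2)
    fix z assume z: "z \<in> simplex n"
    show "lam E z \<le> real (card E)"
      unfolding lam_def
      using sum_bounded_above[of E "\<lambda>e. \<Prod>i\<in>e. z i" 1]
      apply simp
      apply (rule sum_bounded_above[of E "\<lambda>e. \<Prod>i\<in>e. z i" 1, simplified])
      apply (rule prod_le_1)
      using G z unfolding is_3graph_def simplex_def by auto
  qed
  then show ?thesis unfolding lagrangian_def using y by (intro cSup_upper) auto
qed

lemma choose3: "real (m choose 3) * 6 = real m * (real m - 1) * (real m - 2)"
proof (induction m)
  case 0 then show ?case by simp
next
  case (Suc m)
  have "Suc m choose 3 = (m choose 2) + (m choose 3)"
    by (simp add: numeral_3_eq_3 numeral_2_eq_2)
  moreover have "real (m choose 2) * 2 = real m * (real m - 1)"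
  proof -
    have "even (m * (m - 1))" by (cases "even m") auto
    then have "(m choose 2) * 2 = m * (m - 1)" by (simp add: choose_two)
    then have "real ((m choose 2) * 2) = real (m * (m - 1))" by simp
    then show ?thesis by (cases m) (auto simp: of_nat_mult algebra_simps)
  qed
  ultimately show ?case using Suc by (simp add: algebra_simps)
qed

lemma K_lower:
  assumes "k \<ge> (1::nat)"
  shows "real k * (real k - 1) / (6 * (real k + 1)^2) \<le> lagrangian (k + 1) (complete3 (k + 1))"
proof -
  define u :: "nat \<Rightarrow> real" where "u = (\<lambda>i. 1 / (real k + 1))"
  have G: "is_3graph (k+1) (complete3 (k+1))" unfolding is_3graph_def complete3_def by auto
  have us: "u \<in> simplex (k+1)" unfolding simplex_def u_def by (auto simp: field_simps)
  have "lam (complete3 (k+1)) u = real (card (complete3 (k+1))) * (1 / (real k + 1))^3"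
    unfolding lam_def u_def complete3_def by simp
  also have "card (complete3 (k+1)) = (k+1) choose 3"
    unfolding complete3_def by (subst n_subsets) auto
  finally have "lam (complete3 (k+1)) u = real ((k+1) choose 3) * (1 / (real k + 1))^3" .
  also have "\<dots> = real k * (real k - 1) / (6 * (real k + 1)^2)"
  proof -
    have c: "real ((k+1) choose 3) = (real k+1)*(real k*(real k-1))/6"
      using choose3[of "k+1"] by (simp add: algebra_simps)
    have p: "real k + 1 > 0" by simp
    have g: "K*a/6 * (1/K)^3 = a/(6*K^2)" if "K > 0" for K a :: real
      using that by (simp add: power3_eq_cube power2_eq_square field_simps)
    show ?thesis unfolding c by (rule g[OF p])
  qed
  finally show ?thesis using lag_upper[OF G us] by simp
qed

lemma link_mem:
  assumes "f \<in> link E v" "is_3graph n E"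
  shows "\<exists>a b. f = {a,b} \<and> {v,a,b} \<in> E \<and> v \<noteq> a \<and> v \<noteq> b \<and> a \<noteq> b"
proof -
  obtain a b where ab: "f = {a,b}" "{v,a,b} \<in> E" using assms(1) unfolding link_def by auto
  then have "card {v,a,b} = 3" using assms(2) unfolding is_3graph_def by auto
  then have "v \<noteq> a \<and> v \<noteq> b \<and> a \<noteq> b"
    by (auto simp: card_insert_if split: if_splits)
  then show ?thesis using ab by blast
qed

lemma link_props:
  assumes "f \<in> link E v" "is_3graph n E"
  shows "f \<subseteq> {1..n} - {v}" "card f = 2"
proof -
  obtain a b where ab: "f = {a,b}" "{v,a,b} \<in> E" "v \<noteq> a" "v \<noteq> b" "a \<noteq> b"
    using link_mem[OF assms] by blast
  have all: "\<forall>e\<in>E. e \<subseteq> {1..n} \<and> card e = 3" using assms(2) unfolding is_3graph_def .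
  have sub: "{v,a,b} \<subseteq> {1..n}" using bspec[OF all ab(2)] by (rule conjunct1)
  show "f \<subseteq> {1..n} - {v}" using sub ab(1,3,4) by blast
  show "card f = 2" using ab(1,5) by simp
qed

lemma decomp:
  assumes G: "is_3graph n E"
  shows "lam E y = (\<Sum>e\<in>{e\<in>E. v \<notin> e}. \<Prod>i\<in>e. y i) + y v * lam (link E v) y"
proof -
  have fE: "finite E" using fin_E[OF G] .
  have split: "E = {e\<in>E. v \<notin> e} \<union> {e\<in>E. v \<in> e}" by auto
  have "lam E y = (\<Sum>e\<in>{e\<in>E. v \<notin> e}. \<Prod>i\<in>e. y i) + (\<Sum>e\<in>{e\<in>E. v \<in> e}. \<Prod>i\<in>e. y i)"
    unfolding lam_def using fE by (subst split, subst sum.union_disjoint) auto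
  also have "(\<Sum>e\<in>{e\<in>E. v \<in> e}. \<Prod>i\<in>e. y i) = (\<Sum>e\<in>{e\<in>E. v \<in> e}. y v * (\<Prod>i\<in>e-{v}. y i))"
  proof (rule sum.cong[OF refl])
    fix e assume e: "e \<in> {e\<in>E. v \<in> e}"
    then have "finite e" using G unfolding is_3graph_def by (metis (no_types, lifting) card.infinite mem_Collect_eq zero_neq_numeral)
    then show "prod y e = y v * prod y (e - {v})" using e by (simp add: prod.remove)
  qed
  also have "\<dots> = y v * (\<Sum>e\<in>{e\<in>E. v \<in> e}. \<Prod>i\<in>e-{v}. y i)" by (simp add: sum_distrib_left)
  also have "(\<Sum>e\<in>{e\<in>E. v \<in> e}. \<Prod>i\<in>e-{v}. y i) = lam (link E v) y"
  proof -
    have inj: "inj_on (\<lambda>e. e - {v}) {e\<in>E. v \<in> e}"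
      by (rule inj_onI) (metis insert_Diff mem_Collect_eq)
    have img: "(\<lambda>e. e - {v}) ` {e\<in>E. v \<in> e} = link E v"
    proof
      show "(\<lambda>e. e - {v}) ` {e\<in>E. v \<in> e} \<subseteq> link E v"
      proof
        fix f assume "f \<in> (\<lambda>e. e - {v}) ` {e\<in>E. v \<in> e}"
        then obtain e where e: "e \<in> E" "v \<in> e" "f = e - {v}" by auto
        have "card e = 3" using e G unfolding is_3graph_def by auto
        then have "card f = 2" using e by (simp add: card_Diff_singleton_if)
        then obtain a b where "f = {a,b}" using card_2_iff by metis
        moreover have "e = {v,a,b}" using e \<open>f = {a,b}\<close> by auto
        ultimately show "f \<in> link E v" unfolding link_def using e by auto
      qed
    next
      show "link E v \<subseteq> (\<lambda>e. e - {v}) ` {e\<in>E. v \<in> e}"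
      proof
        fix f assume f: "f \<in> link E v"
        obtain a b where ab: "f = {a,b}" "{v,a,b} \<in> E" "v \<noteq> a" "v \<noteq> b" "a \<noteq> b"
          using link_mem[OF f G] by blast
        then have "f = {v,a,b} - {v}" by auto
        then show "f \<in> (\<lambda>e. e - {v}) ` {e\<in>E. v \<in> e}" using ab by blast
      qed
    qed
    show ?thesis unfolding lam_def
      by (subst img[symmetric], subst sum.reindex[OF inj]) simp
  qed
  finally show ?thesis by simp
qed

lemma arith1: assumes "(K::real) > 0" shows "(1-1/K)/2*(K/(K+1))^2 = 3*(K*(K-1)/(6*(K+1)^2))"
proof -
  have a: "K + 1 > 0" using assms by simp
  have "(1-1/K)/2*(K/(K+1))^2 = ((K-1)/K)/2*(K^2/(K+1)^2)" using assms by (simp add: power_divide field_simps)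
  also have "\<dots> = (K-1)*K/(2*(K+1)^2)" using assms a by (simp add: power2_eq_square)
  also have "\<dots> = 3*(K*(K-1)/(6*(K+1)^2))" by (cases "(K+1)^2 = 0") (auto simp: field_simps)
  finally show ?thesis .
qed

theorem claim3p2:
  fixes n k :: nat and E :: "nat set set" and x :: "nat \<Rightarrow> real" and v :: nat
  assumes "k \<ge> 1"
    and "is_3graph n E"
    and "lagrangian n E > lagrangian (k + 1) (complete3 (k + 1))"
    and "optimal_weight n E x"
    and "v \<in> {1..n}"
    and "clique_number n (link E v) \<le> k"
  shows "x v < 1 / (real k + 1)"
proof (rule ccontr)
  assume "\<not> x v < 1 / (real k + 1)"
  then have s1: "x v \<ge> 1 / (real k + 1)" by simp
  define s where "s = x v"
  have xs: "x \<in> simplex n" and opt: "lam E x = lagrangian n E"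
    using assms(4) by (auto simp: optimal_weight_def)
  have xnn: "\<forall>i\<in>{1..n}. 0 \<le> x i" and xsum: "(\<Sum>i\<in>{1..n}. x i) = 1"
    using xs by (auto simp: simplex_def)
  have s_le: "s \<le> 1" using xs assms(5) unfolding simplex_def s_def by auto
  have "1/(real k+1) > 0" by simp
  then have s_pos: "s > 0" using s1 unfolding s_def by linarith
  define A where "A = (\<Sum>e\<in>{e\<in>E. v \<notin> e}. \<Prod>i\<in>e. x i)"
  define Lx where "Lx = lam (link E v) x"
  define Lam where "Lam = lam E x"
  have dec: "Lam = A + s * Lx" unfolding Lam_def A_def Lx_def s_def by (rule decomp[OF assms(2)])
  have key: "(c^2+c+1) * Lam - c^2 * Lx \<le> 0" if c: "1 < c" "c < 1 + s" for c
  proof -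
    define y where "y = (\<lambda>i. c * x i - (if i = v then c - 1 else 0))"
    have yv: "y v = c*s - (c-1)" unfolding y_def s_def by simp
    have "c*(1-s) \<le> (1+s)*(1-s)" using c s_le by (intro mult_right_mono) auto
    also have "\<dots> \<le> 1" by (simp add: algebra_simps)
    finally have yv_nn: "c*s - (c-1) \<ge> 0" by (simp add: algebra_simps)
    have ysum: "(\<Sum>i\<in>{1..n}. y i) = 1"
      unfolding y_def using assms(5) xsum
      by (simp add: sum_subtractf sum_distrib_left[symmetric])
    have ynn: "\<forall>i\<in>{1..n}. 0 \<le> y i"
    proof
      fix i assume i: "i \<in> {1..n}"
      show "0 \<le> y i"
      proof (cases "i = v")
        case True then show ?thesis using yv yv_nn by simp
      next
        case False then show ?thesis using xnn i c unfolding y_def by simp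
      qed
    qed
    have ys: "y \<in> simplex n"
    proof -
      have "\<forall>i\<in>{1..n}. y i \<le> 1"
      proof
        fix i assume i: "i \<in> {1..n}"
        have "y i \<le> (\<Sum>j\<in>{1..n}. y j)" by (rule member_le_sum[OF i]) (use ynn in auto)
        then show "y i \<le> 1" using ysum by simp
      qed
      then show ?thesis using ynn ysum unfolding simplex_def by auto
    qed
    have le: "lam E y \<le> Lam" using lag_upper[OF assms(2) ys] opt Lam_def by simp
    have A_y: "(\<Sum>e\<in>{e\<in>E. v \<notin> e}. \<Prod>i\<in>e. y i) = c^3 * A"
    proof -
      have "(\<Sum>e\<in>{e\<in>E. v \<notin> e}. \<Prod>i\<in>e. y i) = (\<Sum>e\<in>{e\<in>E. v \<notin> e}. c^3 * (\<Prod>i\<in>e. x i))"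
      proof (rule sum.cong[OF refl])
        fix e assume e: "e \<in> {e\<in>E. v \<notin> e}"
        then have ce: "card e = 3" using assms(2) unfolding is_3graph_def by auto
        have "(\<Prod>i\<in>e. y i) = (\<Prod>i\<in>e. c * x i)" using e unfolding y_def by (intro prod.cong) auto
        also have "\<dots> = c^3 * (\<Prod>i\<in>e. x i)" by (simp add: prod.distrib ce)
        finally show "(\<Prod>i\<in>e. y i) = c^3 * (\<Prod>i\<in>e. x i)" .
      qed
      then show ?thesis unfolding A_def by (simp add: sum_distrib_left)
    qed
    have L_y: "lam (link E v) y = c^2 * Lx"
    proof -
      have "lam (link E v) y = (\<Sum>f\<in>link E v. c^2 * (\<Prod>i\<in>f. x i))"
        unfolding lam_def
      proof (rule sum.cong[OF refl])
        fix f assume f: "f \<in> link E v"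
        have ce: "card f = 2" and fs: "f \<subseteq> {1..n} - {v}" using link_props[OF f assms(2)] by auto
        have "(\<Prod>i\<in>f. y i) = (\<Prod>i\<in>f. c * x i)" using fs unfolding y_def by (intro prod.cong) auto
        also have "\<dots> = c^2 * (\<Prod>i\<in>f. x i)" by (simp add: prod.distrib ce)
        finally show "(\<Prod>i\<in>f. y i) = c^2 * (\<Prod>i\<in>f. x i)" .
      qed
      then show ?thesis unfolding Lx_def lam_def by (simp add: sum_distrib_left)
    qed
    have "lam E y = c^3 * A + (c*s - (c-1)) * (c^2 * Lx)"
      using decomp[OF assms(2), of y v] A_y L_y yv by simp
    with le dec have ineq: "c^3 * A + (c*s - (c-1)) * (c^2 * Lx) \<le> A + s * Lx" by simp
    have "(c-1) * ((c^2+c+1) * Lam - c^2 * Lx) = (c^3 * A + (c*s - (c-1)) * (c^2 * Lx)) - (A + s * Lx)"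
      unfolding dec by (simp add: algebra_simps power2_eq_square power3_eq_cube)
    with ineq have "(c-1) * ((c^2+c+1) * Lam - c^2 * Lx) \<le> 0" by simp
    then show ?thesis using c by (simp add: mult_le_0_iff)
  qed
  have lim: "((\<lambda>c::real. (c^2+c+1) * Lam - c^2 * Lx) \<longlongrightarrow> (1^2+1+1) * Lam - 1^2 * Lx) (at_right 1)"
    by (intro tendsto_intros)
  have ev: "eventually (\<lambda>c::real. (c^2+c+1) * Lam - c^2 * Lx \<le> 0) (at_right 1)"
    unfolding eventually_at_right_field using key s_pos by (intro exI[of _ "1+s"]) auto
  have three: "3 * Lam \<le> Lx"
    using tendsto_upperbound[OF lim ev] by simp
  have fin_cl: "finite {card S | S. S \<subseteq> {1..n} \<and> is_clique (link E v) S}"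
  proof -
    have "{card S | S. S \<subseteq> {1..n} \<and> is_clique (link E v) S} \<subseteq> card ` Pow {1..n}" by auto
    then show ?thesis by (rule finite_subset) simp
  qed
  have cl: "\<forall>S. S \<subseteq> {1..n} - {v} \<and> is_clique (link E v) S \<longrightarrow> card S \<le> k"
  proof (intro allI impI)
    fix S assume S: "S \<subseteq> {1..n} - {v} \<and> is_clique (link E v) S"
    have "card S \<le> clique_number n (link E v)"
      unfolding clique_number_def by (rule Max_ge[OF fin_cl]) (use S in blast)
    then show "card S \<le> k" using assms(6) by simp
  qed
  have Lprops: "\<forall>e\<in>link E v. e \<subseteq> {1..n} - {v} \<and> card e = 2"
    using link_props[OF _ assms(2)] by blast
  have ms: "Lx \<le> (1 - 1/real k)/2 * (\<Sum>i\<in>{1..n}-{v}. x i)^2"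
    unfolding Lx_def using motzkin_straus[OF _ Lprops cl assms(1)] xnn by simp
  have "(\<Sum>i\<in>{1..n}. x i) = x v + (\<Sum>i\<in>{1..n}-{v}. x i)"
    using assms(5) by (simp add: sum.remove)
  then have rest: "(\<Sum>i\<in>{1..n}-{v}. x i) = 1 - s" using xsum s_def by simp
  have kp: "real k > 0" using assms(1) by simp
  have "1 - s \<le> 1 - 1/(real k + 1)" using s1 s_def by simp
  also have "\<dots> = real k / (real k + 1)" using kp by (simp add: field_simps)
  finally have "(1 - s)^2 \<le> (real k / (real k + 1))^2" using s_le by (intro power_mono) auto
  moreover have "(1 - 1/real k)/2 \<ge> 0" using assms(1) by simp
  ultimately have "(1 - 1/real k)/2 * (1 - s)^2 \<le> (1 - 1/real k)/2 * (real k / (real k + 1))^2"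
    by (intro mult_left_mono)
  also have "\<dots> = 3 * (real k * (real k - 1) / (6 * (real k + 1)^2))" by (rule arith1[OF kp])
  finally have "Lx \<le> 3 * (real k * (real k - 1) / (6 * (real k + 1)^2))" using ms rest by simp
  with three have "Lam \<le> real k * (real k - 1) / (6 * (real k + 1)^2)" by simp
  moreover have "Lam > real k * (real k - 1) / (6 * (real k + 1)^2)"
    using K_lower[OF assms(1)] assms(3) opt Lam_def by simp
  ultimately show False by simp
qed

end
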